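(* Let $(X, \|\cdot\|)$ be a real reflexive Banach space. Let $(\|\cdot\|_n)_{n \in \mathbb{N}}$ be a sequence of strictly convex norms on $X$ for which there is a sequence $(s_n)$ of non-negative numbers with $s_n \to 0$ such that for all $n \in \mathbb{N}$ and $x \in X$ $$(1-s_n)\|x\|_n \le \|x\| \le (1+s_n)\|x\|_n.$$ Let $\{F_k\}_{k \in \mathbb{N}}$ be a countable family of convex sets such that for all $k, n \in \mathbb{N}$ the set $F_k$ is a contractive set with respect to $\|\cdot\|_n$. Assume $F = \bigcap_{k \in \mathbb{N}} F_k \neq \emptyset$. Then $F$ is a contractive subset of $X$ with respect to $\|\cdot\|$.
   Context: Given a norm $|\cdot|$ on $X$, a non-empty set $D \subset X$ is contractive with respect to $|\cdot|$ if there exists a mapping $P : X \to D$ with $P|_D = \mathrm{id}_D$ and $|Px - Py| \le |x-y|$ for all $x,y \in X$. *)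

theory Defs
  imports "HOL-Analysis.Analysis"
begin

definition reflexive_space :: "'a::banach itself \<Rightarrow> bool" where
  "reflexive_space _ \<longleftrightarrow>
     (\<forall>\<phi> :: ('a \<Rightarrow>\<^sub>L real) \<Rightarrow>\<^sub>L real. \<exists>x::'a. \<forall>f. blinfun_apply \<phi> f = blinfun_apply f x)"

definition is_norm :: "('a::real_vector \<Rightarrow> real) \<Rightarrow> bool" where
  "is_norm N \<longleftrightarrow>
     (\<forall>x. N x = 0 \<longleftrightarrow> x = 0) \<and>
     (\<forall>c x. N (c *\<^sub>R x) = \<bar>c\<bar> * N x) \<and>
     (\<forall>x y. N (x + y) \<le> N x + N y)"

definition strictly_convex_norm :: "('a::real_vector \<Rightarrow> real) \<Rightarrow> bool" where
  "strictly_convex_norm N \<longleftrightarrow> is_norm N \<and>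
     (\<forall>x y. N x = 1 \<and> N y = 1 \<and> x \<noteq> y \<longrightarrow> N ((1/2) *\<^sub>R (x + y)) < 1)"

definition contractive_set :: "('a::real_vector \<Rightarrow> real) \<Rightarrow> 'a set \<Rightarrow> bool" where
  "contractive_set N D \<longleftrightarrow> D \<noteq> {} \<and>
     (\<exists>P. (\<forall>x. P x \<in> D) \<and> (\<forall>x\<in>D. P x = x) \<and> (\<forall>x y. N (P x - P y) \<le> N (x - y)))"

end

theory Submission
  imports Defs
begin



definition sublin :: "('a::real_vector \<Rightarrow> real) \<Rightarrow> bool" where
  "sublin p \<longleftrightarrow> (\<forall>x y. p (x + y) \<le> p x + p y) \<and> (\<forall>c x. c \<ge> 0 \<longrightarrow> p (c *\<^sub>R x) = c * p x)"

definition shiftK :: "('a::real_vector \<Rightarrow> real) \<Rightarrow> ('a \<times> real) set \<Rightarrow> 'a \<Rightarrow> real" where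
  "shiftK m K x = Inf ((\<lambda>(w,r). m (x + w) - r) ` K)"

lemma sublin_0: "sublin p \<Longrightarrow> p 0 = 0"
  unfolding sublin_def by (metis mult_zero_left order_refl scaleR_zero_left)

lemma sublin_neg: "sublin p \<Longrightarrow> - p (- x) \<le> p x"
  unfolding sublin_def by (metis add.right_inverse add.commute sublin_0 sublin_def add_le_cancel_left)

locale shiftK_loc =
  fixes m :: "'a::real_vector \<Rightarrow> real" and K :: "('a \<times> real) set"
  assumes sl: "sublin m"
    and K0: "(0,0) \<in> K"
    and Kadd: "\<And>w1 r1 w2 r2. (w1,r1) \<in> K \<Longrightarrow> (w2,r2) \<in> K \<Longrightarrow> (w1+w2, r1+r2) \<in> K"
    and Kscale: "\<And>c w r. c > 0 \<Longrightarrow> (w,r) \<in> K \<Longrightarrow> (c *\<^sub>R w, c * r) \<in> K"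
    and Kle: "\<And>w r. (w,r) \<in> K \<Longrightarrow> r \<le> m w"
begin

lemma madd: "m (x + y) \<le> m x + m y" using sl unfolding sublin_def by blast
lemma mscale: "c \<ge> 0 \<Longrightarrow> m (c *\<^sub>R x) = c * m x" using sl unfolding sublin_def by blast

lemma bdd: "bdd_below ((\<lambda>(w,r). m (x + w) - r) ` K)"
proof (rule bdd_belowI[where m="- m (- x)"])
  fix v assume "v \<in> (\<lambda>(w,r). m (x + w) - r) ` K"
  then obtain w r where wr: "(w,r) \<in> K" "v = m (x + w) - r" by auto
  have "m w \<le> m (x + w) + m (- x)" using madd[of "x + w" "- x"] by simp
  with Kle[OF wr(1)] wr(2) show "- m (- x) \<le> v" by simp
qed

lemma lower: "(w,r) \<in> K \<Longrightarrow> shiftK m K x \<le> m (x + w) - r"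
  unfolding shiftK_def by (rule cInf_lower[OF _ bdd]) force

lemma greatest: "(\<And>w r. (w,r) \<in> K \<Longrightarrow> a \<le> m (x + w) - r) \<Longrightarrow> a \<le> shiftK m K x"
  unfolding shiftK_def using K0 by (intro cInf_greatest) auto

lemma le_m: "shiftK m K x \<le> m x"
  using lower[OF K0, of x] by simp

lemma neg_le: "(w,r) \<in> K \<Longrightarrow> shiftK m K (- w) \<le> - r"
  using lower[of w r "- w"] sublin_0[OF sl] by simp

lemma sub_add: "shiftK m K (x + y) \<le> shiftK m K x + shiftK m K y"
proof -
  have "shiftK m K (x + y) - (m (y + w2) - r2) \<le> shiftK m K x" if h2: "(w2,r2) \<in> K" for w2 r2
  proof (rule greatest)
    fix w1 r1 assume h1: "(w1,r1) \<in> K"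
    have "shiftK m K (x + y) \<le> m ((x + y) + (w1 + w2)) - (r1 + r2)"
      by (rule lower[OF Kadd[OF h1 h2]])
    also have "m ((x + y) + (w1 + w2)) \<le> m (x + w1) + m (y + w2)"
      using madd[of "x + w1" "y + w2"] by (simp add: algebra_simps)
    finally show "shiftK m K (x + y) - (m (y + w2) - r2) \<le> m (x + w1) - r1" by simp
  qed
  then have "shiftK m K (x + y) - shiftK m K x \<le> shiftK m K y"
    by (intro greatest) (simp add: algebra_simps)
  then show ?thesis by simp
qed

lemma scale_le: assumes c: "c > 0" shows "shiftK m K (c *\<^sub>R x) \<le> c * shiftK m K x"
proof -
  have "shiftK m K (c *\<^sub>R x) / c \<le> shiftK m K x"
  proof (rule greatest)
    fix w r assume h: "(w,r) \<in> K"
    have "shiftK m K (c *\<^sub>R x) \<le> m (c *\<^sub>R x + c *\<^sub>R w) - c * r"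
      by (rule lower[OF Kscale[OF c h]])
    also have "\<dots> = c * (m (x + w) - r)"
      using mscale[of c "x + w"] c by (simp add: scaleR_add_right algebra_simps)
    finally show "shiftK m K (c *\<^sub>R x) / c \<le> m (x + w) - r"
      using c by (simp add: divide_le_eq mult.commute)
  qed
  then show ?thesis using c by (simp add: divide_le_eq mult.commute)
qed

lemma sublin_shiftK: "sublin (shiftK m K)"
  unfolding sublin_def
proof (intro conjI allI impI)
  fix x y show "shiftK m K (x + y) \<le> shiftK m K x + shiftK m K y" by (rule sub_add)
next
  fix c :: real and x assume c: "c \<ge> 0"
  show "shiftK m K (c *\<^sub>R x) = c * shiftK m K x"
  proof (cases "c = 0")
    case True
    have "shiftK m K 0 \<le> 0" using le_m[of 0] sublin_0[OF sl] by simp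
    moreover have "0 \<le> shiftK m K 0" by (rule greatest) (use Kle in auto)
    ultimately show ?thesis using True by simp
  next
    case False
    then have cp: "c > 0" using c by simp
    have "shiftK m K (inverse c *\<^sub>R (c *\<^sub>R x)) \<le> inverse c * shiftK m K (c *\<^sub>R x)"
      using cp by (intro scale_le) simp
    then have "c * shiftK m K x \<le> shiftK m K (c *\<^sub>R x)"
      using cp by (simp add: field_simps)
    with scale_le[OF cp, of x] show ?thesis by simp
  qed
qed

end

lemma zorn_min_fun:
  fixes A :: "('b \<Rightarrow> real) set"
  assumes ne: "A \<noteq> {}"
    and ch: "\<And>C. C \<subseteq> A \<Longrightarrow> C \<noteq> {} \<Longrightarrow> (\<forall>a\<in>C. \<forall>b\<in>C. (\<forall>x. a x \<le> b x) \<or> (\<forall>x. b x \<le> a x))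
      \<Longrightarrow> \<exists>u\<in>A. \<forall>a\<in>C. \<forall>x. u x \<le> a x"
  shows "\<exists>m\<in>A. \<forall>a\<in>A. (\<forall>x. a x \<le> m x) \<longrightarrow> a = m"
proof -
  define P where "P = (\<lambda>a b :: 'b \<Rightarrow> real. \<forall>x. b x \<le> a x)"
  have po: "partial_order_on A (relation_of P A)"
    by (rule partial_order_on_relation_ofI) (auto simp: P_def intro: order_trans intro!: ext antisym)
  have "\<exists>m \<in> A. \<forall>a \<in> A. P m a \<longrightarrow> a = m"
  proof (rule predicate_Zorn[OF po])
    fix C assume C: "C \<in> Chains (relation_of P A)"
    then have CA: "C \<subseteq> A" by (rule Chains_relation_of)
    show "\<exists>u\<in>A. \<forall>a\<in>C. P a u"
    proof (cases "C = {}")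
      case True then show ?thesis using ne by auto
    next
      case False
      have "\<forall>a\<in>C. \<forall>b\<in>C. (\<forall>x. a x \<le> b x) \<or> (\<forall>x. b x \<le> a x)"
        using C unfolding Chains_def relation_of_def P_def by blast
      from ch[OF CA False this] show ?thesis unfolding P_def by blast
    qed
  qed
  then show ?thesis unfolding P_def by blast
qed

lemma HB_core:
  fixes p :: "'a::real_vector \<Rightarrow> real"
  assumes p: "sublin p"
  shows "\<exists>g. linear g \<and> (\<forall>x. g x \<le> p x)"
proof -
  define A where "A = {q :: 'a \<Rightarrow> real. sublin q \<and> (\<forall>x. q x \<le> p x)}"
  have "\<exists>m\<in>A. \<forall>a\<in>A. (\<forall>x. a x \<le> m x) \<longrightarrow> a = m"
  proof (rule zorn_min_fun)
    show "A \<noteq> {}" using p unfolding A_def by auto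
  next
    fix C assume CA: "C \<subseteq> A" and Cne: "C \<noteq> {}"
      and chn: "\<forall>a\<in>C. \<forall>b\<in>C. (\<forall>x. a x \<le> b x) \<or> (\<forall>x. b x \<le> a x)"
    define u where "u x = Inf ((\<lambda>a. a x) ` C)" for x
    have bdd: "bdd_below ((\<lambda>a. a x) ` C)" for x
    proof (rule bdd_belowI[where m="- p (- x)"])
      fix v assume "v \<in> (\<lambda>a. a x) ` C"
      then obtain a where a: "a \<in> C" "v = a x" by auto
      then have "sublin a" "a (- x) \<le> p (- x)" using CA unfolding A_def by auto
      then show "- p (- x) \<le> v" using sublin_neg[of a x] a by simp
    qed
    have ule: "u x \<le> a x" if "a \<in> C" for a x
      unfolding u_def using that bdd by (intro cInf_lower) auto
    have ugr: "c \<le> u x" if "\<And>a. a \<in> C \<Longrightarrow> c \<le> a x" for c x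
      unfolding u_def using that Cne by (intro cInf_greatest) auto
    have asub: "sublin a" "\<And>x. a x \<le> p x" if "a \<in> C" for a using that CA unfolding A_def by auto
    have "sublin u"
      unfolding sublin_def
    proof (intro conjI allI impI)
      fix x y
      have "u (x + y) \<le> a x + b y" if a: "a \<in> C" and b: "b \<in> C" for a b
      proof (cases "\<forall>z. a z \<le> b z")
        case True
        have "u (x + y) \<le> a (x + y)" by (rule ule[OF a])
        also have "\<dots> \<le> a x + a y" using asub(1)[OF a] unfolding sublin_def by blast
        also have "\<dots> \<le> a x + b y" using True by simp
        finally show ?thesis .
      next
        case False
        then have ba: "\<forall>z. b z \<le> a z" using chn a b by blast
        have "u (x + y) \<le> b (x + y)" by (rule ule[OF b])
        also have "\<dots> \<le> b x + b y" using asub(1)[OF b] unfolding sublin_def by blast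
        also have "\<dots> \<le> a x + b y" using ba by simp
        finally show ?thesis .
      qed
      then have "u (x + y) - b y \<le> u x" if b: "b \<in> C" for b
        using b by (intro ugr) (simp add: algebra_simps)
      then have "u (x + y) - u x \<le> u y" by (intro ugr) (simp add: algebra_simps)
      then show "u (x + y) \<le> u x + u y" by simp
    next
      fix c :: real and x assume c: "0 \<le> c"
      have sc: "a (c *\<^sub>R x) = c * a x" if "a \<in> C" for a
        using asub(1)[OF that] c unfolding sublin_def by blast
      show "u (c *\<^sub>R x) = c * u x"
      proof (cases "c = 0")
        case True
        obtain a where a: "a \<in> C" using Cne by blast
        have "u 0 \<le> 0" using ule[OF a, of 0] sublin_0[OF asub(1)[OF a]] by simp
        moreover have "0 \<le> u 0" by (rule ugr) (metis asub(1) sublin_0 order_refl)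
        ultimately show ?thesis using True by simp
      next
        case False
        then have cp: "c > 0" using c by simp
        have "c * u x \<le> u (c *\<^sub>R x)"
          by (rule ugr) (simp add: sc ule cp)
        moreover have "u (c *\<^sub>R x) / c \<le> u x"
          by (rule ugr) (use ule cp sc in \<open>auto simp: divide_le_eq mult.commute\<close>)
        ultimately show ?thesis using cp by (simp add: divide_le_eq mult.commute)
      qed
    qed
    moreover have "\<forall>x. u x \<le> p x"
      using Cne asub ule by (meson all_not_in_conv order_trans)
    ultimately show "\<exists>u\<in>A. \<forall>a\<in>C. \<forall>x. u x \<le> a x" unfolding A_def using ule by blast
  qed
  then obtain m where mA: "m \<in> A" and mmin: "\<And>a. a \<in> A \<Longrightarrow> (\<forall>x. a x \<le> m x) \<Longrightarrow> a = m" by blast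
  have ms: "sublin m" and mp: "\<And>x. m x \<le> p x" using mA unfolding A_def by auto
  have mneg: "m (- y) \<le> - m y" for y
  proof -
    define K where "K = {(t *\<^sub>R y, t * m y) | t. t \<ge> 0}"
    interpret shiftK_loc m K
    proof
      show "sublin m" by (rule ms)
      show "(0,0) \<in> K" unfolding K_def by force
      fix w1 r1 w2 r2 assume "(w1,r1) \<in> K" "(w2,r2) \<in> K"
      then show "(w1 + w2, r1 + r2) \<in> K" unfolding K_def
        by clarsimp (metis add_nonneg_nonneg distrib_right scaleR_left_distrib)
    next
      fix c :: real and w r assume "c > 0" "(w, r) \<in> K"
      then show "(c *\<^sub>R w, c * r) \<in> K" unfolding K_def by force
    next
      fix w r assume "(w, r) \<in> K"
      then show "r \<le> m w" unfolding K_def using ms unfolding sublin_def by auto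
    qed
    have "shiftK m K \<in> A" unfolding A_def using sublin_shiftK le_m mp order_trans by blast
    then have "shiftK m K = m" using mmin le_m by blast
    moreover have "(y, m y) \<in> K" unfolding K_def by (rule CollectI, rule exI[of _ 1]) simp
    ultimately show ?thesis using neg_le by metis
  qed
  have "linear m"
  proof (rule linearI)
    fix x y
    have "m x \<le> m (x + y) + m (- y)" using ms unfolding sublin_def by (metis add_diff_cancel diff_conv_add_uminus)
    then have "m x + m y \<le> m (x + y)" using mneg[of y] by simp
    moreover have "m (x + y) \<le> m x + m y" using ms unfolding sublin_def by blast
    ultimately show "m (x + y) = m x + m y" by simp
  next
    fix c :: real and x
    show "m (c *\<^sub>R x) = c *\<^sub>R m x"
    proof (cases "c \<ge> 0")
      case True then show ?thesis using ms unfolding sublin_def by simp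
    next
      case False
      have eq: "m (- ((- c) *\<^sub>R x)) = - m ((- c) *\<^sub>R x)"
        using mneg[of "(- c) *\<^sub>R x"] sublin_neg[OF ms, of "(- c) *\<^sub>R x"] by simp
      have "m ((- c) *\<^sub>R x) = (- c) * m x" using ms False unfolding sublin_def
        by (metis le_minus_iff neg_0_le_iff_le nle_le)
      with eq show ?thesis by simp
    qed
  qed
  then show ?thesis using mp by blast
qed


lemma linear_dominated_blinfun:
  fixes g :: "'a::real_normed_vector \<Rightarrow> real"
  assumes "linear g" "\<And>x. g x \<le> K * norm x"
  shows "bounded_linear g"
proof (rule bounded_linear_intro[where K=K])
  fix x y show "g (x + y) = g x + g y" using assms(1) by (simp add: linear_add)
next
  fix r x show "g (r *\<^sub>R x) = r *\<^sub>R g x" using assms(1) by (simp add: linear_scale)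
next
  fix x
  have "g (- x) = - g x" using assms(1) by (simp add: linear_neg)
  then have "- g x \<le> K * norm x" using assms(2)[of "- x"] by simp
  then show "norm (g x) \<le> norm x * K" using assms(2)[of x] by (simp add: abs_le_iff mult.commute)
qed

lemma HB_norming:
  fixes p :: "'a::real_normed_vector \<Rightarrow> real"
  assumes p: "sublin p" and pK: "\<And>x. p x \<le> K * norm x"
  shows "\<exists>g::'a \<Rightarrow>\<^sub>L real. (\<forall>x. g x \<le> p x) \<and> g z = p z"
proof -
  define K' where "K' = {(t *\<^sub>R z, t * p z) | t. t \<ge> 0}"
  interpret shiftK_loc p K'
  proof
    show "sublin p" by (rule p)
    show "(0,0) \<in> K'" unfolding K'_def by force
    fix w1 r1 w2 r2 assume "(w1,r1) \<in> K'" "(w2,r2) \<in> K'"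
    then show "(w1 + w2, r1 + r2) \<in> K'" unfolding K'_def
      by clarsimp (metis add_nonneg_nonneg distrib_right scaleR_left_distrib)
  next
    fix c :: real and w r assume "c > 0" "(w, r) \<in> K'"
    then show "(c *\<^sub>R w, c * r) \<in> K'" unfolding K'_def by force
  next
    fix w r assume "(w, r) \<in> K'"
    then show "r \<le> p w" unfolding K'_def using p unfolding sublin_def by auto
  qed
  obtain g where g: "linear g" "\<And>x. g x \<le> shiftK p K' x"
    using HB_core[OF sublin_shiftK] by blast
  have gp: "g x \<le> p x" for x using g(2)[of x] le_m[of x] by simp
  have zK: "(z, p z) \<in> K'" unfolding K'_def by (rule CollectI, rule exI[of _ 1]) simp
  have "g (- z) \<le> - p z" using g(2)[of "- z"] neg_le[OF zK] by simp
  then have "p z \<le> g z" using g(1) by (simp add: linear_neg)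
  then have gz: "g z = p z" using gp[of z] by simp
  have bl: "bounded_linear g" using g(1) order_trans[OF gp pK] by (rule linear_dominated_blinfun)
  show ?thesis
    by (rule exI[of _ "Blinfun g"]) (simp add: bounded_linear_Blinfun_apply[OF bl] gp gz)
qed

lemma sublin_norm: "sublin (norm :: 'a::real_normed_vector \<Rightarrow> real)"
  unfolding sublin_def by (simp add: norm_triangle_ineq)

lemma HB_separation:
  fixes S :: "'a::real_normed_vector set"
  assumes S: "convex S" "closed S" "S \<noteq> {}" and z: "z \<notin> S"
  shows "\<exists>g::'a \<Rightarrow>\<^sub>L real. \<exists>d>0. \<forall>y\<in>S. g y \<le> g z - d"
proof -
  define d where "d = infdist z S"
  have dpos: "d > 0" unfolding d_def using infdist_pos_not_in_closed S z by blast
  obtain y0 where y0: "y0 \<in> S" using S by blast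
  define K' where "K' = {(t *\<^sub>R (z - y), t * d) | t y. t \<ge> 0 \<and> y \<in> S}"
  interpret shiftK_loc norm K'
  proof
    show "sublin norm" by (rule sublin_norm)
    show "(0,0) \<in> K'" unfolding K'_def using y0 by force
    fix w1 r1 w2 r2 assume "(w1,r1) \<in> K'" "(w2,r2) \<in> K'"
    then obtain t1 y1 t2 y2 where h: "w1 = t1 *\<^sub>R (z - y1)" "r1 = t1 * d" "t1 \<ge> 0" "y1 \<in> S"
      "w2 = t2 *\<^sub>R (z - y2)" "r2 = t2 * d" "t2 \<ge> 0" "y2 \<in> S" unfolding K'_def by blast
    show "(w1 + w2, r1 + r2) \<in> K'"
    proof (cases "t1 + t2 = 0")
      case True
      then have "t1 = 0" "t2 = 0" using h by auto
      then show ?thesis using h \<open>(0,0) \<in> K'\<close> by simp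
    next
      case False
      then have tp: "t1 + t2 > 0" using h by simp
      define y where "y = (t1 / (t1 + t2)) *\<^sub>R y1 + (t2 / (t1 + t2)) *\<^sub>R y2"
      have yS: "y \<in> S" unfolding y_def using S(1) h tp
        by (intro convexD) (auto simp: add_divide_distrib[symmetric])
      have "(t1 + t2) *\<^sub>R y = ((t1+t2) * (t1/(t1+t2))) *\<^sub>R y1 + ((t1+t2)*(t2/(t1+t2))) *\<^sub>R y2"
        unfolding y_def by (simp add: scaleR_add_right)
      also have "\<dots> = t1 *\<^sub>R y1 + t2 *\<^sub>R y2" using tp by simp
      finally have "(t1 + t2) *\<^sub>R y = t1 *\<^sub>R y1 + t2 *\<^sub>R y2" .
      then have "(t1 + t2) *\<^sub>R (z - y) = w1 + w2"
        unfolding h by (simp add: scaleR_diff_right scaleR_add_left algebra_simps)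
      moreover have "(t1 + t2) * d = r1 + r2" using h by (simp add: algebra_simps)
      ultimately show ?thesis unfolding K'_def using yS tp by (metis (mono_tags, lifting) CollectI less_imp_le)
    qed
  next
    fix c :: real and w r assume "c > 0" "(w, r) \<in> K'"
    then show "(c *\<^sub>R w, c * r) \<in> K'" unfolding K'_def by force
  next
    fix w r assume "(w, r) \<in> K'"
    then obtain t y where h: "w = t *\<^sub>R (z - y)" "r = t * d" "t \<ge> 0" "y \<in> S" unfolding K'_def by blast
    have "d \<le> norm (z - y)" unfolding d_def using infdist_le[OF h(4), of z] by (simp add: dist_norm)
    then show "r \<le> norm w" using h by (simp add: mult_left_mono)
  qed
  obtain g where g: "linear g" "\<And>x. g x \<le> shiftK norm K' x"
    using HB_core[OF sublin_shiftK] by blast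
  have gp: "g x \<le> 1 * norm x" for x using g(2)[of x] le_m[of x] by simp
  have bl: "bounded_linear g" using g(1) gp by (rule linear_dominated_blinfun)
  have "g y \<le> g z - d" if y: "y \<in> S" for y
  proof -
    have "(z - y, d) \<in> K'" unfolding K'_def using y by (intro CollectI exI[of _ 1] exI[of _ y]) simp
    then have "g (- (z - y)) \<le> - d" using g(2) neg_le by (meson order_trans)
    then show ?thesis using g(1) by (simp add: linear_diff linear_neg)
  qed
  then show ?thesis using dpos
    by (intro exI[of _ "Blinfun g"] exI[of _ d]) (simp add: bounded_linear_Blinfun_apply[OF bl])
qed



definition Phi :: "('a::real_normed_vector \<Rightarrow> 'a) \<Rightarrow> ('a \<times> ('a \<Rightarrow>\<^sub>L real)) \<Rightarrow> real" where
  "Phi f = (\<lambda>(x,g). blinfun_apply g (f x))"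

lemma closed_transfer:
  fixes G :: "('b::topological_space) filter"
  assumes "inf (nhds z) G \<noteq> bot" "closed S" "eventually (\<lambda>w. w \<in> S) G"
  shows "z \<in> S"
proof (rule ccontr)
  assume "z \<notin> S"
  then have "eventually (\<lambda>w. w \<in> - S) (nhds z)"
    using assms(2) by (intro eventually_nhds_in_open) auto
  then have "eventually (\<lambda>_. False) (inf (nhds z) G)"
    using assms(3) unfolding eventually_inf by blast
  then show False using assms(1) by (simp add: eventually_False)
qed

lemma cluster:
  fixes f :: "'i \<Rightarrow> 'a::banach \<Rightarrow> 'a" and F :: "'i filter"
  assumes refl: "reflexive_space TYPE('a)" and F: "F \<noteq> bot"
    and bnd: "eventually (\<lambda>i. \<forall>x. norm (f i x) \<le> B x) F"
  shows "\<exists>q. \<forall>x y (g::'a \<Rightarrow>\<^sub>L real) a b c. eventually (\<lambda>i. a * g (f i x) + b * g (f i y) \<le> c) F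
           \<longrightarrow> a * g (q x) + b * g (q y) \<le> c"
proof -
  define bb where "bb = (\<lambda>(x, g::'a \<Rightarrow>\<^sub>L real). B x * norm g)"
  define Box where "Box = PiE UNIV (\<lambda>k. {- bb k .. bb k})"
  have "compactin (product_topology (\<lambda>i. euclidean) UNIV) Box"
    unfolding Box_def by (subst compactin_PiE) auto
  then have cB: "compact Box" by (simp add: euclidean_product_topology)
  define G where "G = filtermap (\<lambda>i. Phi (f i)) F"
  have G: "G \<noteq> bot" unfolding G_def using F by (simp add: filtermap_bot_iff)
  have "eventually (\<lambda>w. w \<in> Box) G"
    unfolding G_def eventually_filtermap
  proof (rule eventually_mono[OF bnd])
    fix i assume h: "\<forall>x. norm (f i x) \<le> B x"
    have "\<bar>g (f i x)\<bar> \<le> B x * norm g" for x and g :: "'a \<Rightarrow>\<^sub>L real"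
    proof -
      have "\<bar>g (f i x)\<bar> \<le> norm g * norm (f i x)" using norm_blinfun[of g "f i x"] by simp
      also have "\<dots> \<le> norm g * B x" using h by (simp add: mult_left_mono)
      finally show ?thesis by (simp add: mult.commute)
    qed
    then show "Phi (f i) \<in> Box" unfolding Box_def bb_def Phi_def by (force simp: abs_le_iff)
  qed
  then obtain \<Phi> where \<Phi>B: "\<Phi> \<in> Box" and cl: "inf (nhds \<Phi>) G \<noteq> bot"
    using cB G unfolding compact_filter by blast
  have tr: "\<Phi> \<in> S" if "closed S" "eventually (\<lambda>i. Phi (f i) \<in> S) F" for S
    using closed_transfer[OF cl that(1)] that(2) unfolding G_def eventually_filtermap by blast
  have lin1: "\<Phi> (x, g1 + g2) = \<Phi> (x, g1) + \<Phi> (x, g2)" for x g1 g2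
  proof -
    have "\<Phi> \<in> {w. w (x, g1 + g2) = w (x, g1) + w (x, g2)}"
      by (rule tr) (auto intro!: closed_Collect_eq continuous_intros simp: Phi_def blinfun.add_left)
    then show ?thesis by simp
  qed
  have lin2: "\<Phi> (x, r *\<^sub>R g) = r * \<Phi> (x, g)" for x g r
  proof -
    have "\<Phi> \<in> {w. w (x, r *\<^sub>R g) = r * w (x, g)}"
      by (rule tr) (auto intro!: closed_Collect_eq continuous_intros simp: Phi_def blinfun.scaleR_left)
    then show ?thesis by simp
  qed
  have bl: "bounded_linear (\<lambda>g. \<Phi> (x, g))" for x
  proof (rule bounded_linear_intro[where K="B x"])
    fix g1 g2 show "\<Phi> (x, g1 + g2) = \<Phi> (x, g1) + \<Phi> (x, g2)" by (rule lin1)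
  next
    fix r g show "\<Phi> (x, r *\<^sub>R g) = r *\<^sub>R \<Phi> (x, g)" using lin2 by simp
  next
    fix g
    have "\<Phi> (x, g) \<in> {- bb (x,g) .. bb (x,g)}" using \<Phi>B unfolding Box_def by (simp add: PiE_iff)
    then show "norm (\<Phi> (x, g)) \<le> norm g * B x"
      unfolding bb_def by (auto simp: abs_le_iff mult.commute)
  qed
  have "\<exists>y. \<forall>g. \<Phi> (x, g) = blinfun_apply g y" for x
    using refl[unfolded reflexive_space_def, rule_format, of "Blinfun (\<lambda>g. \<Phi> (x, g))"]
    by (simp add: bounded_linear_Blinfun_apply[OF bl])
  then obtain q where q: "\<And>x g. \<Phi> (x, g) = blinfun_apply g (q x)" by metis
  show ?thesis
  proof (intro exI[of _ q] allI impI)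
    fix x y :: 'a and g :: "'a \<Rightarrow>\<^sub>L real" and a b c :: real
    assume ev: "eventually (\<lambda>i. a * g (f i x) + b * g (f i y) \<le> c) F"
    have "\<Phi> \<in> {w. a * w (x, g) + b * w (y, g) \<le> c}"
      by (rule tr) (auto intro!: closed_Collect_le continuous_intros eventually_mono[OF ev] simp: Phi_def)
    then show "a * g (q x) + b * g (q y) \<le> c" by (simp add: q)
  qed
qed




definition clus :: "('i \<Rightarrow> 'a::real_normed_vector \<Rightarrow> 'a) \<Rightarrow> 'i filter \<Rightarrow> ('a \<Rightarrow> 'a) \<Rightarrow> bool" where
  "clus f F q \<longleftrightarrow> (\<forall>x y (g::'a \<Rightarrow>\<^sub>L real) a b c. eventually (\<lambda>i. a * g (f i x) + b * g (f i y) \<le> c) F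
           \<longrightarrow> a * g (q x) + b * g (q y) \<le> c)"

lemma cluster':
  fixes f :: "'i \<Rightarrow> 'a::banach \<Rightarrow> 'a" and F :: "'i filter"
  assumes "reflexive_space TYPE('a)" "F \<noteq> bot" "eventually (\<lambda>i. \<forall>x. norm (f i x) \<le> B x) F"
  shows "\<exists>q. clus f F q"
  using cluster[OF assms] unfolding clus_def by blast

lemma T1:
  fixes f :: "'i \<Rightarrow> 'a::real_normed_vector \<Rightarrow> 'a"
  assumes c: "clus f F q" and p: "sublin p" "\<And>x. p x \<le> K * norm x"
    and ev: "eventually (\<lambda>i. p (f i x - f i y) \<le> c) F"
  shows "p (q x - q y) \<le> c"
proof -
  obtain g :: "'a \<Rightarrow>\<^sub>L real" where g: "\<And>z. g z \<le> p z" "g (q x - q y) = p (q x - q y)"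
    using HB_norming[OF p] by blast
  have "eventually (\<lambda>i. 1 * g (f i x) + (-1) * g (f i y) \<le> c) F"
    using ev by (rule eventually_mono) (metis g(1) blinfun.diff_right order_trans mult_1 mult_minus1 diff_conv_add_uminus)
  then have "1 * g (q x) + (-1) * g (q y) \<le> c" using c unfolding clus_def by blast
  then show ?thesis using g(2) by (simp add: blinfun.diff_right)
qed

lemma T2:
  fixes f :: "'i \<Rightarrow> 'a::real_normed_vector \<Rightarrow> 'a"
  assumes c: "clus f F q" and p: "sublin p" "\<And>x. p x \<le> K * norm x"
    and ev: "eventually (\<lambda>i. p (f i x - z) \<le> c) F"
  shows "p (q x - z) \<le> c"
proof -
  obtain g :: "'a \<Rightarrow>\<^sub>L real" where g: "\<And>z. g z \<le> p z" "g (q x - z) = p (q x - z)"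
    using HB_norming[OF p] by blast
  have "eventually (\<lambda>i. 1 * g (f i x) + 0 * g (f i x) \<le> c + g z) F"
    using ev by (rule eventually_mono) (metis g(1) blinfun.diff_right order_trans mult_1 mult_zero_left add_0_right diff_le_eq)
  then have "1 * g (q x) + 0 * g (q x) \<le> c + g z" using c unfolding clus_def by blast
  then show ?thesis using g(2) by (simp add: blinfun.diff_right)
qed

lemma T3:
  fixes f :: "'i \<Rightarrow> 'a::real_normed_vector \<Rightarrow> 'a"
  assumes c: "clus f F q" and F: "F \<noteq> bot" and S: "convex S" "closed S" "S \<noteq> {}"
    and ev: "eventually (\<lambda>i. f i x \<in> S) F"
  shows "q x \<in> S"
proof (rule ccontr)
  assume "q x \<notin> S"
  then obtain g :: "'a \<Rightarrow>\<^sub>L real" and d where gd: "d > 0" "\<And>y. y \<in> S \<Longrightarrow> g y \<le> g (q x) - d"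
    using HB_separation[OF S] by blast
  have "eventually (\<lambda>i. 1 * g (f i x) + 0 * g (f i x) \<le> g (q x) - d) F"
    using ev by (rule eventually_mono) (simp add: gd)
  then have "1 * g (q x) + 0 * g (q x) \<le> g (q x) - d" using c unfolding clus_def by blast
  then show False using gd by simp
qed

lemma T4:
  fixes f :: "'i \<Rightarrow> 'a::real_normed_vector \<Rightarrow> 'a"
  assumes c: "clus f F q" and ev: "eventually (\<lambda>i. f i x = x) F"
  shows "q x = x"
proof -
  have "norm (q x - x) \<le> 0"
    by (rule T2[OF c sublin_norm, where K=1]) (auto intro: eventually_mono[OF ev])
  then show ?thesis by simp
qed

lemma is_norm_nonneg: "is_norm N \<Longrightarrow> N x \<ge> 0"
proof -
  assume n: "is_norm N"
  have "N (x + (- x)) \<le> N x + N (- x)" using n unfolding is_norm_def by blast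
  moreover have "N (- x) = N x" using n unfolding is_norm_def by (metis abs_minus_cancel abs_one mult_1 scaleR_minus1_left)
  moreover have "N 0 = 0" using n unfolding is_norm_def by blast
  ultimately show ?thesis by simp
qed

lemma is_norm_sublin: "is_norm N \<Longrightarrow> sublin N"
  unfolding is_norm_def sublin_def by auto

lemma strict_conv:
  assumes sc: "strictly_convex_norm N" and b: "N b \<le> N a" and eq: "N ((1/2) *\<^sub>R (a + b)) = N a"
  shows "a = b"
proof -
  have n: "is_norm N" using sc unfolding strictly_convex_norm_def by blast
  have tri: "N (u + v) \<le> N u + N v" for u v using n unfolding is_norm_def by blast
  have hom: "N (c *\<^sub>R u) = \<bar>c\<bar> * N u" for c u using n unfolding is_norm_def by blast
  have zero: "N u = 0 \<longleftrightarrow> u = 0" for u using n unfolding is_norm_def by blast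
  define r where "r = N a"
  show ?thesis
  proof (cases "r = 0")
    case True
    then have "a = 0" using zero r_def by simp
    moreover have "N b = 0" using b True is_norm_nonneg[OF n, of b] r_def by simp
    then have "b = 0" using zero by simp
    ultimately show ?thesis by simp
  next
    case False
    then have rp: "r > 0" using is_norm_nonneg[OF n, of a] r_def by simp
    have "N ((1/2) *\<^sub>R (a + b)) \<le> (1/2) * (N a + N b)" using hom[of "1/2" "a+b"] tri[of a b] by simp
    then have Nb: "N b = r" using eq b r_def by simp
    show ?thesis
    proof (rule ccontr)
      assume ne: "a \<noteq> b"
      define a' where "a' = (1/r) *\<^sub>R a"
      define b' where "b' = (1/r) *\<^sub>R b"
      have "N a' = 1" "N b' = 1" using rp Nb r_def hom unfolding a'_def b'_def by auto
      moreover have "a' \<noteq> b'" using ne rp unfolding a'_def b'_def by simp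
      ultimately have "N ((1/2) *\<^sub>R (a' + b')) < 1" using sc unfolding strictly_convex_norm_def by blast
      moreover have "(1/2) *\<^sub>R (a' + b') = (1/r) *\<^sub>R ((1/2) *\<^sub>R (a + b))"
        unfolding a'_def b'_def by (simp add: scaleR_add_right mult.commute)
      ultimately have "(1/r) * N ((1/2) *\<^sub>R (a + b)) < 1" using hom rp by simp
      then show False using eq rp r_def by simp
    qed
  qed
qed



lemma stage1:
  fixes N :: "'a::banach \<Rightarrow> real" and Fs :: "nat \<Rightarrow> 'a set"
  assumes refl: "reflexive_space TYPE('a)"
    and sc: "strictly_convex_norm N"
    and N1: "\<And>x. N x \<le> 2 * norm x" and N2: "\<And>x. norm x \<le> 2 * N x"
    and ret: "\<And>k. contractive_set N (Fs k)"
    and p0: "p0 \<in> (\<Inter>k. Fs k)"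
  shows "\<exists>Q. (\<forall>x. Q x \<in> (\<Inter>k. Fs k)) \<and> (\<forall>x\<in>(\<Inter>k. Fs k). Q x = x) \<and> (\<forall>x y. N (Q x - Q y) \<le> N (x - y))"
proof -
  define F where "F = (\<Inter>k. Fs k)"
  have n: "is_norm N" using sc unfolding strictly_convex_norm_def by blast
  have Nsl: "sublin N" by (rule is_norm_sublin[OF n])
  have tri: "N (u + v) \<le> N u + N v" for u v using n unfolding is_norm_def by blast
  have hom: "N (c *\<^sub>R u) = \<bar>c\<bar> * N u" for c u using n unfolding is_norm_def by blast
  define GG where "GG = {f :: 'a \<Rightarrow> 'a. (\<forall>x\<in>F. f x = x) \<and> (\<forall>x y. N (f x - f y) \<le> N (x - y))}"
  define v where "v f = (\<lambda>x. N (f x - p0))" for f :: "'a \<Rightarrow> 'a"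
  define B where "B x = norm p0 + 4 * norm (x - p0)" for x
  have half: "(1/2) *\<^sub>R u + (1/2) *\<^sub>R u = u" for u :: 'a
    by (metis scaleR_half_double scaleR_add_right)
  have p0F: "p0 \<in> F" using p0 unfolding F_def .
  have bndG: "norm (f x) \<le> B x" if "f \<in> GG" for f x
  proof -
    have "f p0 = p0" using that p0F unfolding GG_def by blast
    moreover have "N (f x - f p0) \<le> N (x - p0)" using that unfolding GG_def by blast
    ultimately have "N (f x - p0) \<le> N (x - p0)" by simp
    then have "norm (f x - p0) \<le> 4 * norm (x - p0)" using N1[of "x - p0"] N2[of "f x - p0"] by linarith
    then show ?thesis unfolding B_def using norm_triangle_ineq[of "f x - p0" p0] by simp
  qed
  have "\<exists>m\<in>v ` GG. \<forall>a\<in>v ` GG. (\<forall>x. a x \<le> m x) \<longrightarrow> a = m"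
  proof (rule zorn_min_fun)
    have "id \<in> GG" unfolding GG_def by simp
    then show "v ` GG \<noteq> {}" by blast
  next
    fix C assume CA: "C \<subseteq> v ` GG" and Cne: "C \<noteq> {}"
      and chn: "\<forall>a\<in>C. \<forall>b\<in>C. (\<forall>x. a x \<le> b x) \<or> (\<forall>x. b x \<le> a x)"
    define Cf where "Cf = {f \<in> GG. v f \<in> C}"
    define S where "S f0 = {f \<in> Cf. \<forall>x. v f x \<le> v f0 x}" for f0
    define FF where "FF = (INF f0\<in>Cf. principal (S f0))"
    have Cfne: "Cf \<noteq> {}" using CA Cne unfolding Cf_def by blast
    have dir: "\<exists>x\<in>Cf. principal (S x) \<le> inf (principal (S a)) (principal (S b))"
      if "a \<in> Cf" "b \<in> Cf" for a b
    proof -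
      have "(\<forall>x. v a x \<le> v b x) \<or> (\<forall>x. v b x \<le> v a x)" using chn that unfolding Cf_def by blast
      then show ?thesis
      proof
        assume h: "\<forall>x. v a x \<le> v b x"
        have "S a \<subseteq> S a \<inter> S b" unfolding S_def using h order_trans by fastforce
        then show ?thesis using that by auto
      next
        assume h: "\<forall>x. v b x \<le> v a x"
        have "S b \<subseteq> S a \<inter> S b" unfolding S_def using h order_trans by fastforce
        then show ?thesis using that by auto
      qed
    qed
    have evFF: "eventually P FF \<longleftrightarrow> (\<exists>b\<in>Cf. eventually P (principal (S b)))" for P
      unfolding FF_def by (rule eventually_INF_base[OF Cfne dir])
    have FFne: "FF \<noteq> bot"
    proof
      assume "FF = bot"
      then have "eventually (\<lambda>_. False) FF" by simp
      then obtain b where "b \<in> Cf" "eventually (\<lambda>_. False) (principal (S b))" using evFF by blast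
      then show False unfolding eventually_principal S_def by auto
    qed
    have evS: "eventually (\<lambda>f. f \<in> S f0) FF" if "f0 \<in> Cf" for f0
      using that unfolding evFF eventually_principal by blast
    obtain f0 where f0: "f0 \<in> Cf" using Cfne by blast
    have evG: "eventually (\<lambda>f. f \<in> GG) FF"
      using evS[OF f0] by (rule eventually_mono) (simp add: S_def Cf_def)
    have "eventually (\<lambda>f. \<forall>x. norm (id f x) \<le> B x) FF"
      using evG by (rule eventually_mono) (simp add: bndG)
    then obtain q where q: "clus id FF q" using cluster'[OF refl FFne] by blast
    have N2': "N x \<le> 2 * norm x" for x by (rule N1)
    have qG: "q \<in> GG"
      unfolding GG_def
    proof (intro CollectI conjI ballI allI)
      fix x assume "x \<in> F"
      then show "q x = x"
        by (intro T4[OF q]) (rule eventually_mono[OF evG], simp add: GG_def)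
    next
      fix x y
      show "N (q x - q y) \<le> N (x - y)"
        by (rule T1[OF q Nsl N2']) (rule eventually_mono[OF evG], simp add: GG_def)
    qed
    have "\<forall>a\<in>C. \<forall>x. v q x \<le> a x"
    proof (intro ballI allI)
      fix a x assume "a \<in> C"
      then obtain f1 where f1: "f1 \<in> Cf" "a = v f1" using CA unfolding Cf_def by blast
      have "N (q x - p0) \<le> N (f1 x - p0)"
        by (rule T2[OF q Nsl N2']) (rule eventually_mono[OF evS[OF f1(1)]], simp add: S_def v_def)
      then show "v q x \<le> a x" using f1 unfolding v_def by simp
    qed
    then show "\<exists>u\<in>v ` GG. \<forall>a\<in>C. \<forall>x. u x \<le> a x" using qG by blast
  qed
  then obtain m where mA: "m \<in> v ` GG" and mmin: "\<forall>a\<in>v ` GG. (\<forall>x. a x \<le> m x) \<longrightarrow> a = m"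
    by blast
  from mA obtain f where fG: "f \<in> GG" and mf: "m = v f" by blast
  have fmin: "v g = v f" if "g \<in> GG" "\<forall>x. v g x \<le> v f x" for g
    using mmin that unfolding mf by blast
  have fx: "f x \<in> Fs k" for x k
  proof -
    obtain P where P: "\<And>x. P x \<in> Fs k" "\<And>x. x \<in> Fs k \<Longrightarrow> P x = x" "\<And>x y. N (P x - P y) \<le> N (x - y)"
      using ret[of k] unfolding contractive_set_def by blast
    define h where "h z = (1/2) *\<^sub>R (f z + P (f z))" for z
    have Pp0: "P p0 = p0" using P(2) p0 by blast
    have hG: "h \<in> GG"
      unfolding GG_def
    proof (intro CollectI conjI ballI allI)
      fix z assume z: "z \<in> F"
      then have "f z = z" using fG unfolding GG_def by blast
      moreover have "P z = z" using z P(2) unfolding F_def by blast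
      ultimately show "h z = z" unfolding h_def by simp
    next
      fix z w
      have "h z - h w = (1/2) *\<^sub>R ((f z - f w) + (P (f z) - P (f w)))"
        unfolding h_def by (simp add: algebra_simps)
      then have "N (h z - h w) = (1/2) * N ((f z - f w) + (P (f z) - P (f w)))"
        using hom[of "1/2"] by simp
      also have "\<dots> \<le> (1/2) * (N (f z - f w) + N (P (f z) - P (f w)))"
        using tri[of "f z - f w" "P (f z) - P (f w)"] by simp
      finally have "N (h z - h w) \<le> (1/2) * (N (f z - f w) + N (P (f z) - P (f w)))" .
      also have "\<dots> \<le> N (f z - f w)" using P(3)[of "f z" "f w"] by simp
      also have "\<dots> \<le> N (z - w)" using fG unfolding GG_def by blast
      finally show "N (h z - h w) \<le> N (z - w)" .
    qed
    have hle: "v h z \<le> v f z" for z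
    proof -
      have "h z - p0 = (1/2) *\<^sub>R ((f z - p0) + (P (f z) - P p0))"
        unfolding h_def Pp0 by (simp add: algebra_simps half)
      then have "N (h z - p0) = (1/2) * N ((f z - p0) + (P (f z) - P p0))"
        using hom[of "1/2"] by simp
      also have "\<dots> \<le> (1/2) * (N (f z - p0) + N (P (f z) - P p0))"
        using tri[of "f z - p0" "P (f z) - P p0"] by simp
      finally have "N (h z - p0) \<le> (1/2) * (N (f z - p0) + N (P (f z) - P p0))" .
      also have "\<dots> \<le> N (f z - p0)" using P(3)[of "f z" p0] by simp
      finally show ?thesis unfolding v_def .
    qed
    have "v h = v f" using fmin[OF hG] hle by blast
    then have eq: "N (h x - p0) = N (f x - p0)" unfolding v_def by metis
    have "h x - p0 = (1/2) *\<^sub>R ((f x - p0) + (P (f x) - p0))"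
      unfolding h_def by (simp add: algebra_simps half)
    then have "N ((1/2) *\<^sub>R ((f x - p0) + (P (f x) - p0))) = N (f x - p0)" using eq by simp
    moreover have "N (P (f x) - p0) \<le> N (f x - p0)" using P(3)[of "f x" p0] Pp0 by simp
    ultimately have "f x - p0 = P (f x) - p0" using strict_conv[OF sc] by blast
    then have "f x = P (f x)" by simp
    then show ?thesis using P(1) by metis
  qed
  show ?thesis
    using fG fx unfolding GG_def F_def by blast
qed



lemma le_of_eps:
  fixes a b :: real
  assumes b: "b \<ge> 0" and h: "\<And>e. e > 0 \<Longrightarrow> a \<le> (1 + e) * b"
  shows "a \<le> b"
proof (rule field_le_epsilon)
  fix e :: real assume e: "e > 0"
  have "a \<le> (1 + e / (b + 1)) * b" using h[of "e / (b + 1)"] e b by simp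
  also have "\<dots> = b + e * (b / (b + 1))" using b by (simp add: field_simps)
  also have "\<dots> \<le> b + e * 1" using b e by (intro add_left_mono mult_left_mono) auto
  finally show "a \<le> b + e" by simp
qed

theorem theorem17:
  fixes Ns :: "nat \<Rightarrow> 'a::banach \<Rightarrow> real"
    and s :: "nat \<Rightarrow> real"
    and Fs :: "nat \<Rightarrow> 'a set"
  assumes "reflexive_space TYPE('a)"
    and "\<And>n. strictly_convex_norm (Ns n)"
    and "\<And>n. s n \<ge> 0"
    and "s \<longlonglongrightarrow> 0"
    and "\<And>n x. (1 - s n) * Ns n x \<le> norm x \<and> norm x \<le> (1 + s n) * Ns n x"
    and "\<And>k. convex (Fs k)"
    and "\<And>k n. contractive_set (Ns n) (Fs k)"
    and "(\<Inter>k. Fs k) \<noteq> {}"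
  shows "contractive_set norm (\<Inter>k. Fs k)"
proof -
  note refl = assms(1) and sc = assms(2) and s0 = assms(3) and slim = assms(4) and eqv = assms(5)
    and cvx = assms(6) and ret = assms(7)
  define F where "F = (\<Inter>k. Fs k)"
  obtain p0 where p0: "p0 \<in> F" using assms(8) unfolding F_def by blast
  have Nnn: "Ns n x \<ge> 0" for n x
    using is_norm_nonneg sc unfolding strictly_convex_norm_def by blast
  have small: "eventually (\<lambda>n. s n < d) sequentially" if "d > 0" for d
    using slim that s0 by (auto simp: tendsto_iff dist_real_def eventually_mono)
  define good where "good n \<longleftrightarrow> s n \<le> 1/2" for n
  have evgood: "eventually good sequentially"
    using small[of "1/2"] by (rule eventually_mono) (auto simp: good_def)
  have N1: "Ns n x \<le> 2 * norm x" if "good n" for n x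
  proof -
    have "(1 - s n) * Ns n x \<le> norm x" using eqv by blast
    moreover have "(1/2) * Ns n x \<le> (1 - s n) * Ns n x"
      using that Nnn[of n x] unfolding good_def by (intro mult_right_mono) auto
    ultimately show ?thesis by simp
  qed
  have N2: "norm x \<le> 2 * Ns n x" if "good n" for n x
  proof -
    have "norm x \<le> (1 + s n) * Ns n x" using eqv by blast
    moreover have "(1 + s n) * Ns n x \<le> 2 * Ns n x"
      using that Nnn[of n x] unfolding good_def by (intro mult_right_mono) auto
    ultimately show ?thesis by simp
  qed
  define QP where "QP n Q \<longleftrightarrow> (\<forall>x. Q x \<in> F) \<and> (\<forall>x\<in>F. Q x = x) \<and> (\<forall>x y. Ns n (Q x - Q y) \<le> Ns n (x - y))"
    for n and Q :: "'a \<Rightarrow> 'a"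
  have exQ: "\<exists>Q. QP n Q" if "good n" for n
    using stage1[OF refl sc N1[OF that] N2[OF that] ret p0[unfolded F_def]] unfolding QP_def F_def by blast
  define Q where "Q n = (if good n then (SOME Q. QP n Q) else id)" for n
  have QQ: "QP n (Q n)" if "good n" for n
    unfolding Q_def using that someI_ex[OF exQ[OF that]] by simp
  define B where "B x = norm p0 + 4 * norm (x - p0)" for x
  have bnd: "norm (Q n x) \<le> B x" if "good n" for n x
  proof -
    have "Q n p0 = p0" using QQ[OF that] p0 unfolding QP_def by blast
    moreover have "Ns n (Q n x - Q n p0) \<le> Ns n (x - p0)" using QQ[OF that] unfolding QP_def by blast
    ultimately have "Ns n (Q n x - p0) \<le> Ns n (x - p0)" by simp
    then have "norm (Q n x - p0) \<le> 4 * norm (x - p0)" using N1[OF that, of "x - p0"] N2[OF that, of "Q n x - p0"] by linarith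
    then show ?thesis unfolding B_def using norm_triangle_ineq[of "Q n x - p0" p0] by simp
  qed
  have "eventually (\<lambda>n. \<forall>x. norm (Q n x) \<le> B x) sequentially"
    using evgood by (rule eventually_mono) (simp add: bnd)
  then obtain q where q: "clus Q sequentially q" using cluster'[OF refl sequentially_bot] by blast
  obtain n0 where n0: "good n0" using evgood eventually_sequentially by blast
  have clFs: "closed (Fs k)" for k
  proof -
    obtain P where P: "\<And>x. P x \<in> Fs k" "\<And>x. x \<in> Fs k \<Longrightarrow> P x = x" "\<And>x y. Ns n0 (P x - P y) \<le> Ns n0 (x - y)"
      using ret[of n0 k] unfolding contractive_set_def by blast
    have "Fs k = {x. P x = x}"
    proof
      show "Fs k \<subseteq> {x. P x = x}" using P(2) by blast
      show "{x. P x = x} \<subseteq> Fs k"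
      proof
        fix x assume "x \<in> {x. P x = x}"
        then have "x = P x" by simp
        then show "x \<in> Fs k" using P(1)[of x] by simp
      qed
    qed
    moreover have "continuous_on UNIV P"
    proof (rule lipschitz_on_continuous_on)
      show "4-lipschitz_on UNIV P"
      proof (rule lipschitz_onI)
        fix x y :: 'a
        have "norm (P x - P y) \<le> 2 * Ns n0 (P x - P y)" by (rule N2[OF n0])
        also have "\<dots> \<le> 2 * Ns n0 (x - y)" using P(3) by simp
        also have "\<dots> \<le> 4 * norm (x - y)" using N1[OF n0, of "x - y"] by simp
        finally show "dist (P x) (P y) \<le> 4 * dist x y" by (simp add: dist_norm)
      qed simp
    qed
    ultimately show ?thesis by (simp add: closed_Collect_eq continuous_on_id)
  qed
  have Fcl: "closed F" unfolding F_def using clFs by (intro closed_INT) auto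
  have Fcv: "convex F" unfolding F_def using cvx by (intro convex_INT) auto
  have qF: "q x \<in> F" for x
    by (rule T3[OF q sequentially_bot Fcv Fcl])
       (use p0 in blast, rule eventually_mono[OF evgood], use QQ QP_def in blast)
  have qid: "q x = x" if "x \<in> F" for x
    by (rule T4[OF q], rule eventually_mono[OF evgood]) (use QQ QP_def that in blast)
  have qne: "norm (q x - q y) \<le> norm (x - y)" for x y
  proof (rule le_of_eps)
    fix e :: real assume e: "e > 0"
    define d where "d = min (1/2) (e / (2 + e))"
    have d: "d > 0" unfolding d_def using e by simp
    have "eventually (\<lambda>n. norm (Q n x - Q n y) \<le> (1 + e) * norm (x - y)) sequentially"
      using small[OF d]
    proof (rule eventually_mono)
      fix n assume sn: "s n < d"
      then have gn: "good n" unfolding good_def d_def by simp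
      have sle: "s n * (2 + e) \<le> e" using sn e unfolding d_def by (simp add: field_simps)
      have "norm (Q n x - Q n y) \<le> (1 + s n) * Ns n (Q n x - Q n y)" using eqv by blast
      also have "\<dots> \<le> (1 + s n) * Ns n (x - y)"
        using QQ[OF gn] s0[of n] unfolding QP_def by (intro mult_left_mono) auto
      also have "\<dots> \<le> (1 + e) * ((1 - s n) * Ns n (x - y))"
      proof -
        have "1 + s n \<le> (1 + e) * (1 - s n)" using sle by (simp add: algebra_simps)
        from mult_right_mono[OF this Nnn[of n "x - y"]] show ?thesis by (simp add: mult.assoc)
      qed
      also have "\<dots> \<le> (1 + e) * norm (x - y)" using eqv e by (intro mult_left_mono) auto
      finally show "norm (Q n x - Q n y) \<le> (1 + e) * norm (x - y)" .
    qed
    moreover have K1: "\<And>z::'a. norm z \<le> 1 * norm z" by simp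
    ultimately show "norm (q x - q y) \<le> (1 + e) * norm (x - y)"
      using T1[OF q sublin_norm K1] by blast
  qed simp
  show ?thesis
    unfolding contractive_set_def F_def[symmetric]
    using assms(8) qF qid qne unfolding F_def by blast
qed


end
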